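(* Let $\mathcal{U}=\{u_1,\ldots,u_M\}\subset\mathbb{R}\setminus\{0\}$, integers $N>k\ge1$, $\sigma_{N/k}^2>0$, and $y\in\mathbb{R}^N$. Let $[y]_{(i)}$ denote the $i$th largest entry of $y$. For $k_0\in\{0,\ldots,k\}$ define $$\xi_k^N(k_0;y)=\sum_{i=1}^{k_0}\min_{u\in\mathcal{U}}([y]_{(i)}-u)^2+\sum_{i=k_0+1}^{N-(k-k_0)}[y]_{(i)}^2+\sum_{i=N-(k-k_0)+1}^{N}\min_{u\in\mathcal{U}}([y]_{(i)}-u)^2,$$ and let $k_*\in\operatorname{argmin}_{k_0\in\{0,\ldots,k\}}\xi_k^N(k_0;y)$. Let $\mathcal{N}_1$ be the set of indices of the $k_*$ largest entries of $y$, $\mathcal{N}_2$ the set of indices of the $k-k_*$ smallest entries of $y$, and $\mathcal{N}_3=\{1,\ldots,N\}\setminus(\mathcal{N}_1\cup\mathcal{N}_2)$. Then the ML estimator $\hat{x}_{\mathrm{ML}}\in\operatorname{argmax}_{x\in\mathcal{X}_k^N(\mathcal{U})}p(y\mid x)$ satisfies $\hat{x}_{\mathrm{ML},n}=0$ for all $n\in\mathcal{N}_3$ and $\hat{x}_{\mathrm{ML},n}=\operatorname{argmin}_{u\in\mathcal{U}}(y_n-u)^2$ for all $n\in\mathcal{N}_1\cup\mathcal{N}_2$.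
   Context: $\mathcal{X}_k^N(\mathcal{U})$ is the set of $x\in\mathbb{R}^N$ with exactly $k$ nonzero entries, each belonging to $\mathcal{U}$. $p(y\mid x)=(2\pi\sigma_{N/k}^2)^{-N/2}\exp(-\|y-x\|_2^2/(2\sigma_{N/k}^2))$. Sums $\sum_{i=a}^{b}$ with $a>b$ are zero. *)

theory Defs
  imports "HOL-Analysis.Analysis"
begin

definition Xset :: "real set \<Rightarrow> nat \<Rightarrow> nat \<Rightarrow> (nat \<Rightarrow> real) set" where
  "Xset U N k = {x. (\<forall>n. n \<notin> {1..N} \<longrightarrow> x n = 0)
                    \<and> card {n \<in> {1..N}. x n \<noteq> 0} = k
                    \<and> (\<forall>n\<in>{1..N}. x n \<noteq> 0 \<longrightarrow> x n \<in> U)}"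

definition lik :: "real \<Rightarrow> nat \<Rightarrow> (nat \<Rightarrow> real) \<Rightarrow> (nat \<Rightarrow> real) \<Rightarrow> real" where
  "lik sigma2 N y x = (2 * pi * sigma2) powr (- real N / 2)
      * exp (- (\<Sum>n=1..N. (y n - x n)^2) / (2 * sigma2))"

definition sorts_desc :: "nat \<Rightarrow> (nat \<Rightarrow> real) \<Rightarrow> (nat \<Rightarrow> nat) \<Rightarrow> bool" where
  "sorts_desc N y p \<longleftrightarrow> bij_betw p {1..N} {1..N}
      \<and> (\<forall>i\<in>{1..N}. \<forall>j\<in>{1..N}. i \<le> j \<longrightarrow> y (p j) \<le> y (p i))"

definition ord_stat :: "nat \<Rightarrow> (nat \<Rightarrow> real) \<Rightarrow> nat \<Rightarrow> real" where
  "ord_stat N y i = y ((SOME p. sorts_desc N y p) i)"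

definition minU :: "real set \<Rightarrow> real \<Rightarrow> real" where
  "minU U t = Min ((\<lambda>u. (t - u)^2) ` U)"

definition xi :: "real set \<Rightarrow> nat \<Rightarrow> nat \<Rightarrow> nat \<Rightarrow> (nat \<Rightarrow> real) \<Rightarrow> real" where
  "xi U N k k0 y =
     (\<Sum>i=1..k0. minU U (ord_stat N y i))
   + (\<Sum>i=k0+1..N-(k-k0). (ord_stat N y i)^2)
   + (\<Sum>i=N-(k-k0)+1..N. minU U (ord_stat N y i))"

end

theory Submission
  imports Defs
begin

definition qc :: "(nat \<Rightarrow> real) \<Rightarrow> nat \<Rightarrow> nat \<Rightarrow> bool" where
  "qc h a b \<longleftrightarrow> (\<forall>i j l. a \<le> i \<longrightarrow> i < j \<longrightarrow> j < l \<longrightarrow> l < b \<longrightarrow> min (h i) (h l) \<le> h j)"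

definition SE :: "(nat \<Rightarrow> real) \<Rightarrow> nat \<Rightarrow> nat \<Rightarrow> nat \<Rightarrow> nat \<Rightarrow> real" where
  "SE h a b k k0 = sum h {a..<a+k0} + sum h {b-(k-k0)..<b}"

lemma extreme_aux:
  "b - a = n \<Longrightarrow> a \<le> b \<Longrightarrow> qc h a b \<Longrightarrow> T \<subseteq> {a..<b} \<Longrightarrow> card T = k \<Longrightarrow>
   \<exists>k0\<le>k. SE h a b k k0 \<le> sum h T"
proof (induction n arbitrary: a b T k)
  case 0
  then have "T = {}" by auto
  then show ?case using 0 by (auto simp: SE_def)
next
  case (Suc n)
  have ab: "a < b" "a + 1 \<le> b" "b - (a+1) = n" "b - 1 - a = n" "a \<le> b - 1" using Suc.prems(1) by auto
  have fin: "finite T" using Suc.prems finite_subset by blast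
  have kle: "k \<le> b - a" using Suc.prems card_mono[OF _ Suc.prems(4)] by fastforce
  have qc1: "qc h (a+1) b" "qc h a (b-1)" using Suc.prems(3) unfolding qc_def by auto
  have qcab: "\<And>i j l. a \<le> i \<Longrightarrow> i < j \<Longrightarrow> j < l \<Longrightarrow> l < b \<Longrightarrow> min (h i) (h l) \<le> h j"
    using Suc.prems(3) unfolding qc_def by blast
  show ?case
  proof (cases "h a \<le> h (b-1)")
    case True
    show ?thesis
    proof (cases "a \<in> T")
      case aT: True
      define T' where "T' = T - {a}"
      have k1: "k \<ge> 1" using aT fin Suc.prems(5) by (cases k) auto
      have T'sub: "T' \<subseteq> {a+1..<b}" using Suc.prems(4) unfolding T'_def by auto
      have cT': "card T' = k - 1" unfolding T'_def using aT fin Suc.prems(5) by simp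
      obtain k0 where k0: "k0 \<le> k - 1" "SE h (a+1) b (k-1) k0 \<le> sum h T'"
        using Suc.IH[of b "a+1" T' "k-1"] Suc.prems qc1 ab T'sub cT' by auto
      have sT: "sum h T = h a + sum h T'" unfolding T'_def using aT fin by (simp add: sum.remove)
      have "SE h a b k (Suc k0) = h a + SE h (a+1) b (k-1) k0"
        unfolding SE_def using k0(1) k1 kle
        by (simp add: sum.atLeast_Suc_lessThan)
      then show ?thesis using k0 sT k1 by (intro exI[of _ "Suc k0"]) auto
    next
      case aT: False
      have Tsub: "T \<subseteq> {a+1..<b}" using Suc.prems(4) aT by (auto simp: Suc_le_eq order.order_iff_strict)
      have kle2: "k \<le> b - (a+1)" using card_mono[OF _ Tsub] Suc.prems(5) by fastforce
      obtain k0 where k0: "k0 \<le> k" "SE h (a+1) b k k0 \<le> sum h T"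
        using Suc.IH[of b "a+1" T k] Suc.prems qc1 ab Tsub by auto
      show ?thesis
      proof (cases "k0 = 0")
        case True
        then show ?thesis using k0 by (intro exI[of _ 0]) (auto simp: SE_def)
      next
        case False
        have hle: "h a \<le> h (a+k0)"
        proof (cases "a + k0 = b - 1")
          case True then show ?thesis using \<open>h a \<le> h (b-1)\<close> by simp
        next
          case False
          then have "min (h a) (h (b-1)) \<le> h (a+k0)"
            using qcab[of a "a+k0" "b-1"] \<open>k0 \<noteq> 0\<close> k0(1) kle2 by auto
          then show ?thesis using \<open>h a \<le> h (b-1)\<close> by simp
        qed
        have e1: "sum h {a..<a+k0} = h a + sum h {a+1..<a+k0}"
          using False by (simp add: sum.atLeast_Suc_lessThan)
        have e2: "sum h {a+1..<a+1+k0} = sum h {a+1..<a+k0} + h (a+k0)"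
          using False by (cases k0) auto
        have "SE h a b k k0 = SE h (a+1) b k k0 + h a - h (a+k0)"
          unfolding SE_def using e1 e2 by simp
        then show ?thesis using k0 hle by (intro exI[of _ k0]) auto
      qed
    qed
  next
    case False
    then have hb: "h (b-1) \<le> h a" by simp
    show ?thesis
    proof (cases "b - 1 \<in> T")
      case bT: True
      define T' where "T' = T - {b-1}"
      have k1: "k \<ge> 1" using bT fin Suc.prems(5) by (cases k) auto
      have T'sub: "T' \<subseteq> {a..<b-1}"
      proof
        fix x assume x: "x \<in> T'"
        then have "x \<in> {a..<b}" "x \<noteq> b - 1" using Suc.prems(4) unfolding T'_def by auto
        then show "x \<in> {a..<b-1}" by auto
      qed
      have cT': "card T' = k - 1" unfolding T'_def using bT fin Suc.prems(5) by simp
      obtain k0 where k0: "k0 \<le> k - 1" "SE h a (b-1) (k-1) k0 \<le> sum h T'"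
        using Suc.IH[of "b-1" a T' "k-1"] Suc.prems qc1 ab T'sub cT' by auto
      have sT: "sum h T = h (b-1) + sum h T'" unfolding T'_def using bT fin by (simp add: sum.remove)
      have eq: "b - (k - k0) = b - 1 - (k - 1 - k0)" using k0(1) k1 kle by simp
      have "sum h {b - (k - k0)..<b} = sum h {b - (k - k0)..<b-1} + h (b-1)"
      proof -
        have "b - (k - k0) \<le> b - 1" using k0(1) k1 by simp
        moreover have "b = Suc (b - 1)" using Suc.prems(1) by simp
        ultimately show ?thesis by (metis sum.atLeastLessThan_Suc)
      qed
      then have "SE h a b k k0 = h (b-1) + SE h a (b-1) (k-1) k0"
        unfolding SE_def using eq by simp
      then show ?thesis using k0 sT k1 by (intro exI[of _ k0]) auto
    next
      case bT: False
      have Tsub: "T \<subseteq> {a..<b-1}" proof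
    fix x assume x: "x \<in> T"
    then have "x \<in> {a..<b}" "x \<noteq> b - 1" using Suc.prems(4) bT by auto
    then show "x \<in> {a..<b-1}" by auto
  qed
      have kle2: "k \<le> b - 1 - a" using card_mono[OF _ Tsub] Suc.prems(5) by fastforce
      obtain k0 where k0: "k0 \<le> k" "SE h a (b-1) k k0 \<le> sum h T"
        using Suc.IH[of "b-1" a T k] Suc.prems qc1 ab Tsub by auto
      show ?thesis
      proof (cases "k0 = k")
        case True
        then show ?thesis using k0 by (intro exI[of _ k]) (auto simp: SE_def)
      next
        case False
        define c where "c = b - 1 - (k - k0)"
        have cge: "a + k0 \<le> c" "c < b - 1" using kle2 k0(1) False unfolding c_def by auto
        have hle: "h (b-1) \<le> h c"
        proof (cases "c = a")
          case True then show ?thesis using hb by simp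
        next
          case False
          then have "min (h a) (h (b-1)) \<le> h c"
            using qcab[of a c "b-1"] cge Suc.prems(1) by auto
          then show ?thesis using hb by simp
        qed
        have e1: "sum h {c..<b-1} = h c + sum h {c+1..<b-1}"
          using cge by (simp add: sum.atLeast_Suc_lessThan)
        have e2: "sum h {c+1..<b} = sum h {c+1..<b-1} + h (b-1)"
        proof -
          have "c + 1 \<le> b - 1" using cge by simp
          moreover have "b = Suc (b - 1)" using Suc.prems(1) by simp
          ultimately show ?thesis by (metis sum.atLeastLessThan_Suc)
        qed
        have e3: "b - (k - k0) = c + 1" unfolding c_def using False k0(1) kle2 by simp
        have "SE h a b k k0 = SE h a (b-1) k k0 + h (b-1) - h c"
          proof -
          have e4: "b - Suc (k - k0) = c" by (simp add: c_def)
          show ?thesis unfolding SE_def using e1 e2 e3 e4 by simp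
        qed
        then show ?thesis using k0 hle by (intro exI[of _ k0]) auto
      qed
    qed
  qed
qed


lemma sorted_unique:
  assumes p: "sorts_desc N y p" and q: "sorts_desc N y q" and i: "i \<in> {1..N}"
  shows "y (p i) = y (q i)"
proof -
  have mlist: "mset (map (\<lambda>i. - y (r i)) [1..<N+1]) = image_mset (\<lambda>n. - y n) (mset_set {1..N})"
    if r: "sorts_desc N y r" for r
  proof -
    have bij: "bij_betw r {1..N} {1..N}" using r unfolding sorts_desc_def by blast
    have "mset (map (\<lambda>i. - y (r i)) [1..<N+1]) = image_mset ((\<lambda>n. - y n) \<circ> r) (mset_set {1..<N+1})"
      by (simp only: mset_map mset_upt comp_def)
    also have "\<dots> = image_mset (\<lambda>n. - y n) (image_mset r (mset_set {1..N}))"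
      by (simp add: multiset.map_comp atLeastLessThanSuc_atLeastAtMost)
    also have "image_mset r (mset_set {1..N}) = mset_set (r ` {1..N})"
      using bij by (simp add: image_mset_mset_set bij_betw_def)
    also have "r ` {1..N} = {1..N}" using bij by (simp add: bij_betw_def)
    finally show ?thesis .
  qed
  have srt: "sorted (map (\<lambda>i. - y (r i)) [1..<N+1])" if r: "sorts_desc N y r" for r
    using r unfolding sorts_desc_def sorted_iff_nth_mono by (auto simp del: upt_Suc)
  let ?L = "map (\<lambda>n. - y n) [1..<N+1]"
  have ml: "mset ?L = image_mset (\<lambda>n. - y n) (mset_set {1..N})"
    by (simp only: mset_map mset_upt atLeastLessThanSuc_atLeastAtMost Suc_eq_plus1[symmetric])
  have "sort ?L = map (\<lambda>i. - y (p i)) [1..<N+1]"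
    using properties_for_sort[OF _ srt[OF p]] mlist[OF p] ml by simp
  moreover have "sort ?L = map (\<lambda>i. - y (q i)) [1..<N+1]"
    using properties_for_sort[OF _ srt[OF q]] mlist[OF q] ml by simp
  ultimately have eq: "map (\<lambda>i. - y (p i)) [1..<N+1] = map (\<lambda>i. - y (q i)) [1..<N+1]" by simp
  have "\<forall>j\<in>set [1..<N+1]. - y (p j) = - y (q j)" using eq by (simp only: map_eq_conv)
  then show ?thesis using i by (simp del: upt_Suc)
qed

lemma minU_le: "finite U \<Longrightarrow> u \<in> U \<Longrightarrow> minU U t \<le> (t - u)^2"
  unfolding minU_def by (rule Min_le) auto

lemma minU_ex: "finite U \<Longrightarrow> U \<noteq> {} \<Longrightarrow> \<exists>u\<in>U. minU U t = (t - u)^2"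
proof -
  assume "finite U" "U \<noteq> {}"
  then have "minU U t \<in> (\<lambda>u. (t - u)^2) ` U" unfolding minU_def by (intro Min_in) auto
  then show ?thesis by auto
qed

lemma minU_eq: "finite U \<Longrightarrow> u \<in> U \<Longrightarrow> (\<forall>v\<in>U. (t - u)^2 \<le> (t - v)^2) \<Longrightarrow> minU U t = (t - u)^2"
  unfolding minU_def by (rule Min_eqI) auto

lemma quasi:
  assumes "finite U" "U \<noteq> {}" "t3 \<le> t2" "t2 \<le> t1"
  shows "min (minU U t1 - t1^2) (minU U t3 - t3^2) \<le> minU U t2 - t2^2"
proof -
  obtain u where u: "u \<in> U" "minU U t2 = (t2 - u)^2" using minU_ex assms by blast
  have g2: "minU U t2 - t2^2 = u^2 - 2 * t2 * u" using u by (simp add: power2_eq_square algebra_simps)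
  have g1: "minU U t1 - t1^2 \<le> u^2 - 2 * t1 * u" using minU_le[OF assms(1) u(1), of t1]
    by (simp add: power2_eq_square algebra_simps)
  have g3: "minU U t3 - t3^2 \<le> u^2 - 2 * t3 * u" using minU_le[OF assms(1) u(1), of t3]
    by (simp add: power2_eq_square algebra_simps)
  show ?thesis
  proof (cases "u \<ge> 0")
    case True
    then have "t2 * u \<le> t1 * u" using assms(4) by (simp add: mult_right_mono)
    then show ?thesis using g1 g2 by linarith
  next
    case False
    then have "t2 * u \<le> t3 * u" using assms(3) by (simp add: mult_right_mono_neg)
    then show ?thesis using g3 g2 by linarith
  qed
qed

lemma split3:
  fixes g :: "nat \<Rightarrow> real"
  assumes "k0 \<le> M" "M \<le> N"
  shows "sum g {1..N} = sum g {1..k0} + sum g {k0+1..M} + sum g {M+1..N}"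
proof -
  have "sum g {1..M + (N - M)} = sum g {1..M} + sum g {M+1..M + (N - M)}"
    by (rule sum.ub_add_nat) simp
  moreover have "sum g {1..k0 + (M - k0)} = sum g {1..k0} + sum g {k0+1..k0 + (M - k0)}"
    by (rule sum.ub_add_nat) simp
  ultimately show ?thesis using assms by simp
qed


theorem proposition1:
  fixes U :: "real set" and N k :: nat and sigma2 :: real
    and y :: "nat \<Rightarrow> real" and kstar :: nat and p :: "nat \<Rightarrow> nat"
    and xhat :: "nat \<Rightarrow> real"
  assumes "finite U" and "U \<noteq> {}" and "0 \<notin> U"
    and "1 \<le> k" and "k < N" and "sigma2 > 0"
    and "kstar \<le> k" and "\<forall>k0\<le>k. xi U N k kstar y \<le> xi U N k k0 y"
    and "sorts_desc N y p"
  defines "N1 \<equiv> p ` {1..kstar}"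
    and "N2 \<equiv> p ` {N - (k - kstar) + 1..N}"
  defines "N3 \<equiv> {1..N} - (N1 \<union> N2)"
  assumes "\<forall>n. n \<notin> {1..N} \<longrightarrow> xhat n = 0"
    and "\<forall>n\<in>N3. xhat n = 0"
    and "\<forall>n\<in>N1 \<union> N2. xhat n \<in> U \<and> (\<forall>u\<in>U. (y n - xhat n)^2 \<le> (y n - u)^2)"
  shows "xhat \<in> Xset U N k \<and> (\<forall>x\<in>Xset U N k. lik sigma2 N y x \<le> lik sigma2 N y xhat)"
proof -
  note fU = assms(1) and neU = assms(2) and zU = assms(3)
  have bij: "bij_betw p {1..N} {1..N}" using assms(9) unfolding sorts_desc_def by blast
  have inj: "inj_on p {1..N}" and pim: "p ` {1..N} = {1..N}" using bij by (auto simp: bij_betw_def)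
  have mono: "\<And>i j. i \<in> {1..N} \<Longrightarrow> j \<in> {1..N} \<Longrightarrow> i \<le> j \<Longrightarrow> y (p j) \<le> y (p i)"
    using assms(9) unfolding sorts_desc_def by blast
  define z where "z i = y (p i)" for i
  have ord: "ord_stat N y i = z i" if "i \<in> {1..N}" for i
  proof -
    have "sorts_desc N y (SOME q. sorts_desc N y q)" using assms(9) by (rule someI[where P="\<lambda>q. sorts_desc N y q"])
    then show ?thesis unfolding ord_stat_def z_def using sorted_unique[OF _ assms(9) that] by metis
  qed
  define f0 where "f0 i = (z i)^2" for i
  define f1 where "f1 i = minU U (z i)" for i
  define h where "h i = f1 i - f0 i" for i
  define E where "E k0 = {1..k0} \<union> {N - (k - k0) + 1..N}" for k0
  have Esub0: "E k0 \<subseteq> {1..N}" if "k0 \<le> k" for k0 unfolding E_def using that assms(5) by auto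
  note Esub = Esub0[OF assms(7)]
  have Edisj: "{1..k0} \<inter> {N - (k - k0) + 1..N} = {}" if "k0 \<le> k" for k0
    using that assms(5) by auto
  define F where "F S = (\<Sum>i=1..N. if i \<in> S then f1 i else f0 i)" for S
  have Fh: "F S = sum f0 {1..N} + sum h S" if "S \<subseteq> {1..N}" for S
  proof -
    have "F S = (\<Sum>i=1..N. f0 i + (if i \<in> S then h i else 0))"
      unfolding F_def h_def by (rule sum.cong) auto
    also have "\<dots> = sum f0 {1..N} + (\<Sum>i=1..N. if i \<in> S then h i else 0)"
      by (simp add: sum.distrib)
    also have "(\<Sum>i=1..N. if i \<in> S then h i else 0) = sum h ({1..N} \<inter> S)"
      by (simp add: sum.inter_restrict)
    also have "{1..N} \<inter> S = S" using that by auto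
    finally show ?thesis .
  qed
  have xiE: "xi U N k k0 y = sum f0 {1..N} + sum h (E k0)" if "k0 \<le> k" for k0
  proof -
    define M where "M = N - (k - k0)"
    have kM: "k0 \<le> M" "M \<le> N" unfolding M_def using that assms(5) by auto
    have "xi U N k k0 y = sum f1 {1..k0} + sum f0 {k0+1..M} + sum f1 {M+1..N}"
      unfolding xi_def M_def[symmetric] using kM
      by (simp add: ord f1_def f0_def)
    moreover have "sum f0 {1..N} = sum f0 {1..k0} + sum f0 {k0+1..M} + sum f0 {M+1..N}"
      using split3 kM by blast
    moreover have "sum h (E k0) = sum h {1..k0} + sum h {M+1..N}"
      unfolding E_def M_def using Edisj[OF that] by (simp add: sum.union_disjoint)
    moreover have "sum h {1..k0} = sum f1 {1..k0} - sum f0 {1..k0}"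
      "sum h {M+1..N} = sum f1 {M+1..N} - sum f0 {M+1..N}"
      unfolding h_def by (simp_all add: sum_subtractf)
    ultimately show ?thesis by linarith
  qed
  have SEeq: "SE h 1 (N+1) k k0 = sum h (E k0)" if "k0 \<le> k" for k0
  proof -
    have "{1..<1+k0} = {1..k0}" by auto
    moreover have "{N + 1 - (k - k0)..<N + 1} = {N - (k - k0) + 1..N}" using that assms(5) by auto
    ultimately show ?thesis unfolding SE_def E_def using Edisj[OF that] by (simp add: sum.union_disjoint)
  qed
  have pmem: "p i \<in> N1 \<union> N2 \<longleftrightarrow> i \<in> E kstar" if "i \<in> {1..N}" for i
  proof -
    have "p i \<in> N1 \<union> N2 \<longleftrightarrow> p i \<in> p ` E kstar" unfolding N1_def N2_def E_def by auto
    also have "\<dots> \<longleftrightarrow> i \<in> E kstar" using inj_on_image_mem_iff[OF inj that Esub] .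
    finally show ?thesis .
  qed
  have pN: "p i \<in> {1..N}" if "i \<in> {1..N}" for i using pim that by auto
  have costhat: "(\<Sum>n=1..N. (y n - xhat n)^2) = F (E kstar)"
  proof -
    have "(\<Sum>n=1..N. (y n - xhat n)^2) = (\<Sum>i=1..N. (z i - xhat (p i))^2)"
      unfolding z_def using sum.reindex_bij_betw[OF bij, of "\<lambda>n. (y n - xhat n)^2"] by simp
    also have "\<dots> = F (E kstar)" unfolding F_def
    proof (rule sum.cong)
      fix i assume i: "i \<in> {1..N}"
      show "(z i - xhat (p i))^2 = (if i \<in> E kstar then f1 i else f0 i)"
      proof (cases "i \<in> E kstar")
        case True
        then have "p i \<in> N1 \<union> N2" using pmem i by blast
        then have "xhat (p i) \<in> U" "\<forall>u\<in>U. (z i - xhat (p i))^2 \<le> (z i - u)^2"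
          using assms(15) unfolding z_def by auto
        then show ?thesis using True minU_eq[OF fU] unfolding f1_def by simp
      next
        case False
        then have "p i \<in> N3" using pmem i pN unfolding N3_def by blast
        then show ?thesis using False assms(14) unfolding f0_def by simp
      qed
    qed simp
    finally show ?thesis .
  qed
  have supp: "{n \<in> {1..N}. xhat n \<noteq> 0} = p ` E kstar"
  proof
    show "{n \<in> {1..N}. xhat n \<noteq> 0} \<subseteq> p ` E kstar"
    proof
      fix n assume n: "n \<in> {n \<in> {1..N}. xhat n \<noteq> 0}"
      then have "n \<notin> N3" using assms(14) by auto
      then show "n \<in> p ` E kstar" using n unfolding N3_def N1_def N2_def E_def by auto
    qed
  next
    show "p ` E kstar \<subseteq> {n \<in> {1..N}. xhat n \<noteq> 0}"
    proof
      fix n assume n: "n \<in> p ` E kstar"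
      then have "n \<in> N1 \<union> N2" unfolding N1_def N2_def E_def by auto
      then have "xhat n \<in> U" using assms(15) by auto
      then have "xhat n \<noteq> 0" using zU by auto
      moreover have "n \<in> {1..N}" using n Esub pN by blast
      ultimately show "n \<in> {n \<in> {1..N}. xhat n \<noteq> 0}" by simp
    qed
  qed
  have "card (p ` E kstar) = card (E kstar)"
    using card_image[OF inj_on_subset[OF inj Esub]] .
  also have "\<dots> = kstar + (k - kstar)"
    unfolding E_def using Edisj[OF assms(7)] assms(5) assms(7)
    by (simp add: card_Un_disjoint)
  finally have cardhat: "card {n \<in> {1..N}. xhat n \<noteq> 0} = k" using supp assms(7) by simp
  have inX: "xhat \<in> Xset U N k"
    unfolding Xset_def
  proof (intro CollectI conjI)
    show "\<forall>n. n \<notin> {1..N} \<longrightarrow> xhat n = 0" using assms(13) .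
    show "card {n \<in> {1..N}. xhat n \<noteq> 0} = k" using cardhat .
    show "\<forall>n\<in>{1..N}. xhat n \<noteq> 0 \<longrightarrow> xhat n \<in> U"
    proof (intro ballI impI)
      fix n assume "n \<in> {1..N}" "xhat n \<noteq> 0"
      then have "n \<notin> N3" using assms(14) by auto
      then have "n \<in> N1 \<union> N2" using \<open>n \<in> {1..N}\<close> unfolding N3_def by auto
      then show "xhat n \<in> U" using assms(15) by auto
    qed
  qed
  have qch: "qc h 1 (N+1)"
    unfolding qc_def
  proof (intro allI impI)
    fix i j l assume "1 \<le> i" "i < j" "j < l" "l < N + 1"
    then have "z j \<le> z i" "z l \<le> z j" using mono unfolding z_def by auto
    then show "min (h i) (h l) \<le> h j" unfolding h_def f1_def f0_def using quasi[OF fU neU] by blast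
  qed
  have opt: "(\<Sum>n=1..N. (y n - xhat n)^2) \<le> (\<Sum>n=1..N. (y n - x n)^2)" if x: "x \<in> Xset U N k" for x
  proof -
    define T where "T = {i \<in> {1..N}. x (p i) \<noteq> 0}"
    have Tsub: "T \<subseteq> {1..N}" unfolding T_def by auto
    have "p ` T = {n \<in> {1..N}. x n \<noteq> 0}"
    proof
      show "p ` T \<subseteq> {n \<in> {1..N}. x n \<noteq> 0}"
      proof
        fix n assume "n \<in> p ` T"
        then obtain i where i: "i \<in> T" "n = p i" by blast
        then have "i \<in> {1..N}" "x (p i) \<noteq> 0" unfolding T_def by auto
        then show "n \<in> {n \<in> {1..N}. x n \<noteq> 0}" using i(2) pN by blast
      qed
      show "{n \<in> {1..N}. x n \<noteq> 0} \<subseteq> p ` T"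
      proof
        fix n assume n: "n \<in> {n \<in> {1..N}. x n \<noteq> 0}"
        then have "n \<in> p ` {1..N}" using pim by simp
        then obtain i where "i \<in> {1..N}" "n = p i" by blast
        then show "n \<in> p ` T" using n unfolding T_def by auto
      qed
    qed
    then have cT: "card T = k"
      using x card_image[OF inj_on_subset[OF inj Tsub]] unfolding Xset_def by simp
    have xU: "x n \<in> U" if "n \<in> {1..N}" "x n \<noteq> 0" for n using x that unfolding Xset_def by blast
    have "F T \<le> (\<Sum>i=1..N. (z i - x (p i))^2)" unfolding F_def
    proof (rule sum_mono)
      fix i assume i: "i \<in> {1..N}"
      show "(if i \<in> T then f1 i else f0 i) \<le> (z i - x (p i))^2"
      proof (cases "i \<in> T")
        case True
        then have "x (p i) \<in> U" using xU pN i unfolding T_def by blast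
        then show ?thesis using True minU_le[OF fU] unfolding f1_def by simp
      next
        case False
        then show ?thesis using i unfolding T_def f0_def by simp
      qed
    qed
    also have "(\<Sum>i=1..N. (z i - x (p i))^2) = (\<Sum>n=1..N. (y n - x n)^2)"
      unfolding z_def using sum.reindex_bij_betw[OF bij, of "\<lambda>n. (y n - x n)^2"] by simp
    finally have c1: "F T \<le> (\<Sum>n=1..N. (y n - x n)^2)" .
    obtain k0 where k0: "k0 \<le> k" "SE h 1 (N+1) k k0 \<le> sum h T"
    proof -
      have "T \<subseteq> {1..<N+1}" using Tsub by auto
      then show ?thesis using extreme_aux[of "N+1" 1 N h T k] qch cT that by auto
    qed
    have "F (E kstar) = xi U N k kstar y" using Fh[OF Esub] xiE[OF assms(7)] by simp
    also have "\<dots> \<le> xi U N k k0 y" using assms(8) k0(1) by blast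
    also have "\<dots> = sum f0 {1..N} + SE h 1 (N+1) k k0" using xiE[OF k0(1)] SEeq[OF k0(1)] by simp
    also have "\<dots> \<le> F T" using k0(2) Fh[OF Tsub] by simp
    finally show ?thesis using c1 costhat by simp
  qed
  show ?thesis
  proof (intro conjI ballI)
    show "xhat \<in> Xset U N k" by (rule inX)
  next
    fix x assume x: "x \<in> Xset U N k"
    have "- (\<Sum>n=1..N. (y n - x n)^2) / (2 * sigma2) \<le> - (\<Sum>n=1..N. (y n - xhat n)^2) / (2 * sigma2)"
      using opt[OF x] assms(6) by (intro divide_right_mono) auto
    then have "exp (- (\<Sum>n=1..N. (y n - x n)^2) / (2 * sigma2)) \<le> exp (- (\<Sum>n=1..N. (y n - xhat n)^2) / (2 * sigma2))"
      by simp
    then show "lik sigma2 N y x \<le> lik sigma2 N y xhat"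
      unfolding lik_def by (rule mult_left_mono) auto
  qed
qed

end
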